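(* For any qubit channel (completely positive trace-preserving map) $\Lambda$ on $2\times2$ density matrices, $$2\le 2\mathcal{F}_c(\Lambda)+D_{C_{l_1}}(\Lambda)\le 3.$$
   Context: Coherence is taken with respect to the computational basis $\{|0\rangle,|1\rangle\}$. $C_{l_1}(\rho)=\sum_{j\ne k}|\langle j|\rho|k\rangle|$. The set of maximally coherent qubit states is $\mathcal{M}=\{\frac{1}{\sqrt2}(e^{\mathfrak{i}\theta_0}|0\rangle+e^{\mathfrak{i}\theta_1}|1\rangle):\theta_0,\theta_1\in[0,2\pi]\}$; the coherence fraction of a state is $F_c(\rho)=\max_{|\phi\rangle\in\mathcal{M}}\langle\phi|\rho|\phi\rangle$. The optimal coherence fraction of $\Lambda$ is $\mathcal{F}_c(\Lambda)=\max_{|\psi\rangle}F_c\big(\Lambda(|\psi\rangle\langle\psi|)\big)$ over all pure qubit states $|\psi\rangle$. The decohering power of $\Lambda$ with respect to $C_{l_1}$ is $D_{C_{l_1}}(\Lambda)=\max_{|\phi\rangle\in\mathcal{M}}\{C_{l_1}(|\phi\rangle\langle\phi|)-C_{l_1}(\Lambda(|\phi\rangle\langle\phi|))\}=1-\min_{|\phi\rangle\in\mathcal{M}}C_{l_1}\big(\Lambda(|\phi\rangle\langle\phi|)\big)$. *)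

theory Defs
  imports "HOL-Analysis.Analysis"
begin

text \<open>Qubit operators: 2x2 complex matrices, rows/columns indexed by the type 2
  (index 1 = basis state 0, index 2 = basis state 1).\<close>

type_synonym qmat = "complex^2^2"
type_synonym qvec = "complex^2"

definition qform :: "qvec \<Rightarrow> qmat \<Rightarrow> complex" where
  "qform v A = (\<Sum>j\<in>UNIV. \<Sum>k\<in>UNIV. cnj (v$j) * A$j$k * v$k)"

definition psd :: "qmat \<Rightarrow> bool" where
  "psd A \<longleftrightarrow> (\<forall>v. Im (qform v A) = 0 \<and> Re (qform v A) \<ge> 0)"

definition density :: "qmat \<Rightarrow> bool" where
  "density A \<longleftrightarrow> psd A \<and> trace A = 1"

definition proj :: "qvec \<Rightarrow> qmat" where
  "proj v = (\<chi> j k. v$j * cnj (v$k))"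

text \<open>Positivity of a block matrix on C^n (x) C^2, given by its n x n array of
  2x2 blocks M i j (i, j < n).\<close>
definition block_psd :: "nat \<Rightarrow> (nat \<Rightarrow> nat \<Rightarrow> qmat) \<Rightarrow> bool" where
  "block_psd n M \<longleftrightarrow>
     (\<forall>v :: nat \<Rightarrow> qvec.
        let q = (\<Sum>i<n. \<Sum>j<n. \<Sum>a\<in>UNIV. \<Sum>b\<in>UNIV. cnj (v i $ a) * M i j $ a $ b * v j $ b)
        in Im q = 0 \<and> Re q \<ge> 0)"

definition qlinear :: "(qmat \<Rightarrow> qmat) \<Rightarrow> bool" where
  "qlinear \<Lambda> \<longleftrightarrow> (\<forall>A B. \<Lambda> (A + B) = \<Lambda> A + \<Lambda> B) \<and> (\<forall>c A. \<Lambda> (c *s A) = c *s \<Lambda> A)"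

definition completely_positive :: "(qmat \<Rightarrow> qmat) \<Rightarrow> bool" where
  "completely_positive \<Lambda> \<longleftrightarrow>
     (\<forall>n M. block_psd n M \<longrightarrow> block_psd n (\<lambda>i j. \<Lambda> (M i j)))"

definition trace_preserving :: "(qmat \<Rightarrow> qmat) \<Rightarrow> bool" where
  "trace_preserving \<Lambda> \<longleftrightarrow> (\<forall>A. trace (\<Lambda> A) = trace A)"

definition qubit_channel :: "(qmat \<Rightarrow> qmat) \<Rightarrow> bool" where
  "qubit_channel \<Lambda> \<longleftrightarrow> qlinear \<Lambda> \<and> completely_positive \<Lambda> \<and> trace_preserving \<Lambda>"

definition C_l1 :: "qmat \<Rightarrow> real" where
  "C_l1 \<rho> = (\<Sum>j\<in>UNIV. \<Sum>k\<in>(UNIV - {j}). norm (\<rho>$j$k))"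

definition mcs :: "real \<Rightarrow> real \<Rightarrow> qvec" where
  "mcs \<theta>0 \<theta>1 = vector [exp (\<i> * of_real \<theta>0) / of_real (sqrt 2),
                          exp (\<i> * of_real \<theta>1) / of_real (sqrt 2)]"

definition max_coh :: "qvec set" where
  "max_coh = {mcs \<theta>0 \<theta>1 | \<theta>0 \<theta>1. \<theta>0 \<in> {0..2*pi} \<and> \<theta>1 \<in> {0..2*pi}}"

definition coh_fraction :: "qmat \<Rightarrow> real" where
  "coh_fraction \<rho> = Sup ((\<lambda>\<phi>. Re (qform \<phi> \<rho>)) ` max_coh)"

definition pure_states :: "qvec set" where
  "pure_states = {\<psi>. norm \<psi> = 1}"

definition opt_coh_fraction :: "(qmat \<Rightarrow> qmat) \<Rightarrow> real" where
  "opt_coh_fraction \<Lambda> = Sup ((\<lambda>\<psi>. coh_fraction (\<Lambda> (proj \<psi>))) ` pure_states)"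

definition decohering_power :: "(qmat \<Rightarrow> qmat) \<Rightarrow> real" where
  "decohering_power \<Lambda> = Sup ((\<lambda>\<phi>. C_l1 (proj \<phi>) - C_l1 (\<Lambda> (proj \<phi>))) ` max_coh)"

end

theory Submission
  imports Defs
begin

lemma qform_expand: "qform v A = cnj(v$1)*A$1$1* v$1 + cnj(v$1)*A$1$2* v$2 + cnj(v$2)*A$2$1* v$1 + cnj(v$2)*A$2$2* v$2"
  by (simp add: qform_def sum_2)

lemma trace2: "trace (A::qmat) = A$1$1 + A$2$2"
  by (simp add: trace_def sum_2)

lemma C_l1_2: "C_l1 A = norm (A$1$2) + norm (A$2$1)"
proof -
  have a: "(UNIV::2 set) - {1} = {2}" "(UNIV::2 set) - {2} = {1}" by (auto simp: UNIV_2)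
  show ?thesis by (simp add: C_l1_def sum_2 a)
qed

lemma psd_herm:
  assumes "psd A"
  shows "Im (A$1$1) = 0" "Im (A$2$2) = 0" "A$2$1 = cnj (A$1$2)"
proof -
  have q: "\<And>v. Im (qform v A) = 0" using assms psd_def by blast
  have 1: "Im (A$1$1) = 0" using q[of "vector [1,0]"] by (simp add: qform_expand)
  have 2: "Im (A$2$2) = 0" using q[of "vector [0,1]"] by (simp add: qform_expand)
  have 3: "Im (A$1$1 + A$1$2 + A$2$1 + A$2$2) = 0" using q[of "vector [1,1]"] by (simp add: qform_expand)
  have 4: "Im (A$1$1 + \<i>*A$1$2 - \<i>*A$2$1 + A$2$2) = 0" using q[of "vector [1,\<i>]"] by (simp add: qform_expand algebra_simps)
  show "Im (A$1$1) = 0" "Im (A$2$2) = 0" by (fact 1, fact 2)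
  show "A$2$1 = cnj (A$1$2)" using 1 2 3 4 by (simp add: complex_eq_iff)
qed

lemma psd_proj: "psd (proj \<psi>)"
proof -
  have "\<And>v. qform v (proj \<psi>) = (cnj (v$1) * \<psi>$1 + cnj (v$2) * \<psi>$2) * cnj (cnj (v$1) * \<psi>$1 + cnj (v$2) * \<psi>$2)"
    by (simp add: qform_expand proj_def algebra_simps)
  then show ?thesis unfolding psd_def
    by (metis Im_complex_of_real Re_complex_of_real complex_norm_square zero_le_power2)
qed

lemma trace_proj: "norm \<psi> = 1 \<Longrightarrow> trace (proj \<psi>) = 1"
proof -
  assume "norm \<psi> = 1"
  then have "(norm (\<psi>$1))^2 + (norm (\<psi>$2))^2 = 1"
    by (simp add: norm_vec_def L2_set_def sum_2)
  then have "complex_of_real ((norm (\<psi>$1))^2 + (norm (\<psi>$2))^2) = 1" by simp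
  moreover have "\<psi>$1 * cnj (\<psi>$1) = complex_of_real ((norm (\<psi>$1))^2)"
    "\<psi>$2 * cnj (\<psi>$2) = complex_of_real ((norm (\<psi>$2))^2)"
    by (simp_all add: complex_norm_square[symmetric])
  ultimately show ?thesis
    by (simp add: trace2 proj_def)
qed

lemma chan_psd:
  assumes "qubit_channel \<Lambda>" "psd A" shows "psd (\<Lambda> A)"
proof -
  have cp: "completely_positive \<Lambda>" using assms(1) qubit_channel_def by blast
  have "block_psd 1 (\<lambda>i j. A)" using assms(2)
    unfolding block_psd_def psd_def qform_def Let_def by simp
  then have "block_psd 1 (\<lambda>i j. \<Lambda> A)" using cp completely_positive_def by blast
  then have h: "\<And>v :: nat \<Rightarrow> qvec. Im (\<Sum>a\<in>UNIV. \<Sum>b\<in>UNIV. cnj (v 0 $ a) * \<Lambda> A $ a $ b * v 0 $ b) = 0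
     \<and> Re (\<Sum>a\<in>UNIV. \<Sum>b\<in>UNIV. cnj (v 0 $ a) * \<Lambda> A $ a $ b * v 0 $ b) \<ge> 0"
    unfolding block_psd_def Let_def by simp
  show ?thesis unfolding psd_def qform_def
  proof
    fix w :: qvec
    show "Im (\<Sum>j\<in>UNIV. \<Sum>k\<in>UNIV. cnj (w$j) * \<Lambda> A$j$k * w$k) = 0 \<and> Re (\<Sum>j\<in>UNIV. \<Sum>k\<in>UNIV. cnj (w$j) * \<Lambda> A$j$k * w$k) \<ge> 0"
      using h[of "\<lambda>_. w"] by simp
  qed
qed


lemma mcs_ent: "mcs a b $ 1 = cis a / complex_of_real (sqrt 2)" "mcs a b $ 2 = cis b / complex_of_real (sqrt 2)"
  by (simp_all add: mcs_def cis_conv_exp)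

lemma qform_mcs: "qform (mcs a b) A = (A$1$1 + A$2$2)/2 + cis (b-a) * A$1$2 / 2 + cis (a-b) * A$2$1 / 2"
proof -
  have s: "complex_of_real (sqrt 2) * complex_of_real (sqrt 2) = 2"
    by (simp flip: of_real_mult)
  have c: "\<And>x y. cnj (cis x) * cis y = cis (y - x)" by (simp add: cis_cnj cis_mult)
  have c2: "\<And>x. cnj (cis x) * cis x = 1" by (simp add: cis_cnj cis_mult)
  define r where "r = complex_of_real (sqrt 2)"
  have r0: "r \<noteq> 0" unfolding r_def by simp
  have cr: "cnj r = r" unfolding r_def by simp
  have e: "qform (mcs a b) A = (cnj (cis a) * cis a * A$1$1 + cnj (cis a) * cis b * A$1$2
      + cnj (cis b) * cis a * A$2$1 + cnj (cis b) * cis b * A$2$2) / (r*r)"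
    unfolding qform_expand mcs_ent r_def[symmetric] using r0 cr
    by (simp add: divide_simps)
  show ?thesis unfolding e c c2 s[folded r_def]
    by (simp add: field_simps)
qed


lemma qform_le1:
  assumes "psd A" "trace A = 1"
  shows "Re (qform (mcs a b) A) \<le> 1"
proof -
  have cp: "\<And>x. cis (x + pi) = - cis x" by (simp add: cis.ctr complex_eq_iff)
  have "qform (mcs a b) A + qform (mcs (a + pi) b) A = trace A"
  proof -
    have 1: "cis (b - (a + pi)) = - cis (b - a)"
      using cp[of "b - (a + pi)"] by (simp add: algebra_simps)
    have 2: "cis (a + pi - b) = - cis (a - b)"
      using cp[of "a - b"] by (simp add: algebra_simps)
    show ?thesis unfolding qform_mcs trace2 1 2
      by (simp add: field_simps)
  qed
  then have "Re (qform (mcs a b) A) + Re (qform (mcs (a + pi) b) A) = 1"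
    using assms(2) by (metis one_complex.simps(1) plus_complex.simps(1))
  moreover have "Re (qform (mcs (a + pi) b) A) \<ge> 0" using assms(1) psd_def by blast
  ultimately show ?thesis by linarith
qed

lemma qform_opt:
  assumes "psd A" "trace A = 1"
  shows "Re (qform (mcs pi (pi - Arg (A$1$2))) A) = 1/2 + C_l1 A / 2"
proof -
  define z where "z = A$1$2"
  have h: "A$2$1 = cnj z" using psd_herm[OF assms(1)] z_def by simp
  have z: "z = complex_of_real (cmod z) * cis (Arg z)" using rcis_cmod_Arg[of z] by (simp add: rcis_def)
  have e1: "cis (- Arg z) * z = complex_of_real (cmod z)"
    by (subst z) (simp add: cis_mult mult.left_commute)
  have e2: "cis (Arg z) * cnj z = complex_of_real (cmod z)"
    using arg_cong[OF e1, of cnj] by (simp add: cis_cnj)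
  have t: "Re (A$1$1 + A$2$2) = 1" using assms(2) trace2 by simp
  have "qform (mcs pi (pi - Arg (A$1$2))) A = (A$1$1 + A$2$2)/2 + complex_of_real (cmod z) / 2 + complex_of_real (cmod z) / 2"
    unfolding qform_mcs h z_def[symmetric] using e1 e2 by simp
  then have "Re (qform (mcs pi (pi - Arg (A$1$2))) A) = Re (A$1$1 + A$2$2)/2 + cmod z"
    by simp
  then show ?thesis using t h unfolding C_l1_2 z_def[symmetric] by simp
qed


lemma max_coh_E: "\<phi> \<in> max_coh \<Longrightarrow> \<exists>a b. \<phi> = mcs a b"
  unfolding max_coh_def by blast

lemma mcs_in: "a \<in> {0..2*pi} \<Longrightarrow> b \<in> {0..2*pi} \<Longrightarrow> mcs a b \<in> max_coh"
  unfolding max_coh_def by blast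

lemma mcs00: "mcs 0 0 \<in> max_coh" by (rule mcs_in) auto

lemma norm_mcs: "norm (mcs a b) = 1"
proof -
  have "norm (cis a / complex_of_real (sqrt 2)) = 1 / sqrt 2" for a
    by (simp add: norm_divide)
  then show ?thesis by (simp add: norm_vec_def L2_set_def sum_2 mcs_ent power_divide)
qed

lemma C_proj_mcs: "C_l1 (proj (mcs a b)) = 1"
proof -
  have "norm (cis a * cnj (cis b) / (complex_of_real (sqrt 2) * complex_of_real (sqrt 2))) = 1/2" for a b
    by (simp add: norm_divide norm_mult)
  from this[of a b] this[of b a] show ?thesis by (simp add: C_l1_2 proj_def mcs_ent)
qed

lemma C_nonneg: "C_l1 A \<ge> 0" by (simp add: C_l1_2)

lemma qform_le1':
  assumes "psd A" "trace A = 1" "\<phi> \<in> max_coh" shows "Re (qform \<phi> A) \<le> 1"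
  using max_coh_E[OF assms(3)] qform_le1[OF assms(1,2)] by auto

lemma cf_le1: "psd A \<Longrightarrow> trace A = 1 \<Longrightarrow> coh_fraction A \<le> 1"
  unfolding coh_fraction_def
  by (rule cSup_least) (use mcs00 qform_le1' in auto)

lemma cf_ge: assumes "psd A" "trace A = 1" shows "1/2 + C_l1 A / 2 \<le> coh_fraction A"
proof -
  have m: "mcs pi (pi - Arg (A$1$2)) \<in> max_coh"
    by (rule mcs_in) (use Arg_bounded[of "A$1$2"] in auto)
  have b: "bdd_above ((\<lambda>\<phi>. Re (qform \<phi> A)) ` max_coh)"
    by (rule bdd_aboveI[where M=1]) (use assms qform_le1' in auto)
  show ?thesis unfolding coh_fraction_def qform_opt[OF assms, symmetric]
    by (rule cSup_upper[OF _ b]) (use m in auto)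
qed

lemma chan_density:
  assumes "qubit_channel \<Lambda>" "norm \<psi> = 1"
  shows "psd (\<Lambda> (proj \<psi>))" "trace (\<Lambda> (proj \<psi>)) = 1"
  using chan_psd[OF assms(1) psd_proj] trace_proj[OF assms(2)] assms(1)
  unfolding qubit_channel_def trace_preserving_def by auto

theorem theorem4:
  fixes \<Lambda> :: "qmat \<Rightarrow> qmat"
  assumes "qubit_channel \<Lambda>"
  shows "2 \<le> 2 * opt_coh_fraction \<Lambda> + decohering_power \<Lambda>
         \<and> 2 * opt_coh_fraction \<Lambda> + decohering_power \<Lambda> \<le> 3"
proof -
  note cd = chan_density[OF assms]
  have pne: "mcs 0 0 \<in> pure_states" using norm_mcs unfolding pure_states_def by blast
  have o1: "\<forall>x \<in> (\<lambda>\<psi>. coh_fraction (\<Lambda> (proj \<psi>))) ` pure_states. x \<le> 1"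
    using cd cf_le1 unfolding pure_states_def by auto
  have d1: "\<forall>x \<in> (\<lambda>\<phi>. C_l1 (proj \<phi>) - C_l1 (\<Lambda> (proj \<phi>))) ` max_coh. x \<le> 1"
    using C_proj_mcs C_nonneg max_coh_E by fastforce
  have ole: "opt_coh_fraction \<Lambda> \<le> 1" unfolding opt_coh_fraction_def
    by (rule cSup_least) (use pne o1 in auto)
  have dle: "decohering_power \<Lambda> \<le> 1" unfolding decohering_power_def
    by (rule cSup_least) (use mcs00 d1 in auto)
  define \<rho> where "\<rho> = \<Lambda> (proj (mcs 0 0))"
  have r: "psd \<rho>" "trace \<rho> = 1" unfolding \<rho>_def using cd norm_mcs by auto
  have oge: "coh_fraction \<rho> \<le> opt_coh_fraction \<Lambda>" unfolding opt_coh_fraction_def \<rho>_def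
    by (rule cSup_upper) (use pne o1 in \<open>auto intro: bdd_aboveI\<close>)
  have dge: "1 - C_l1 \<rho> \<le> decohering_power \<Lambda>" unfolding decohering_power_def \<rho>_def
  proof (rule cSup_upper)
    show "1 - C_l1 (\<Lambda> (proj (mcs 0 0))) \<in> (\<lambda>\<phi>. C_l1 (proj \<phi>) - C_l1 (\<Lambda> (proj \<phi>))) ` max_coh"
      by (rule image_eqI[OF _ mcs00]) (simp add: C_proj_mcs)
  qed (use d1 in \<open>auto intro: bdd_aboveI\<close>)
  show ?thesis using cf_ge[OF r] oge dge ole dle by linarith
qed

end
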